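(* Let $f:\mathbb{R}\to(0,\infty)$ be $C^4$, unimodal with maximum at $\mu$, of the form $f=e^{-H}$ with $H$ regularly varying (there is $\alpha>0$ with $H(tx)/H(t)\to x^\alpha$ as $|t|\to\infty$ for all $x>0$), and with $|(\log f)''''|<M$ for some $M>0$. For $d\ge1$ let $f_d(x)=\prod_{i=1}^d f(x_i)$, fix $\beta>0$, $\ell>0$, set $\epsilon=\ell d^{-1/2}$, $\beta'=\beta+\epsilon$, and let $x\sim f_d^\beta/\int f_d^\beta$ and $y\sim f_d^{\beta'}/\int f_d^{\beta'}$ be independent. Let $$B=\log\left(\frac{f_d^{\beta'}(g(x,\beta,\beta'))\,f_d^{\beta}(g(y,\beta',\beta))}{f_d^{\beta'}(y)\,f_d^{\beta}(x)}\right).$$ Then $$B=\epsilon\sum_{i=1}^d\Big[h(x_i)-h(y_i)+\tfrac12\big(k(y_i)-k(x_i)\big)\Big]+\frac{\epsilon^2}{8\beta}\sum_{i=1}^d\Big[r(x_i)-k(x_i)+r(y_i)-k(y_i)\Big]+(T_x+T_y),$$ where $T_x$ is a function of $x$, $T_y$ is a function of $y$, and $T_x\to0$ and $T_y\to0$ in probability as $d\to\infty$.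
   Context: $g(z,a,b)\in\mathbb{R}^d$ is defined coordinatewise by $g(z,a,b)_i=(a/b)^{1/2}(z_i-\mu)+\mu$. $h=\log f$, $k(x)=(x-\mu)h'(x)$, $r(x)=(x-\mu)^2h''(x)$. *)

theory Defs
  imports "HOL-Probability.Probability"
begin

definition C4 :: "(real \<Rightarrow> real) \<Rightarrow> bool" where
  "C4 f \<longleftrightarrow> (\<forall>n<4. \<forall>x. ((deriv ^^ n) f has_real_derivative (deriv ^^ Suc n) f x) (at x))
            \<and> continuous_on UNIV ((deriv ^^ 4) f)"

definition unimodal_at :: "(real \<Rightarrow> real) \<Rightarrow> real \<Rightarrow> bool" where
  "unimodal_at f mu \<longleftrightarrow> (\<forall>a b. a \<le> b \<and> b \<le> mu \<longrightarrow> f a \<le> f b)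
                      \<and> (\<forall>a b. mu \<le> a \<and> a \<le> b \<longrightarrow> f b \<le> f a)"

definition regularly_varying :: "(real \<Rightarrow> real) \<Rightarrow> bool" where
  "regularly_varying H \<longleftrightarrow> (\<exists>\<alpha>>0. \<forall>x>0. ((\<lambda>t. H (t * x) / H t) \<longlongrightarrow> x powr \<alpha>) at_infinity)"

text \<open>Product density f_d(x) = prod_{i<d} f(x_i), vectors in R^d as functions on {..<d}.\<close>
definition fd :: "(real \<Rightarrow> real) \<Rightarrow> nat \<Rightarrow> (nat \<Rightarrow> real) \<Rightarrow> real" where
  "fd f d x = (\<Prod>i<d. f (x i))"

definition leb :: "nat \<Rightarrow> (nat \<Rightarrow> real) measure" where
  "leb d = PiM {..<d} (\<lambda>_. lborel)"

definition tempered :: "(real \<Rightarrow> real) \<Rightarrow> nat \<Rightarrow> real \<Rightarrow> (nat \<Rightarrow> real) measure" where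
  "tempered f d \<beta> = density (leb d)
      (\<lambda>x. ennreal (fd f d x powr \<beta> / (\<integral>z. fd f d z powr \<beta> \<partial>leb d)))"

definition gmap :: "real \<Rightarrow> (nat \<Rightarrow> real) \<Rightarrow> real \<Rightarrow> real \<Rightarrow> (nat \<Rightarrow> real)" where
  "gmap mu z a b = (\<lambda>i. sqrt (a / b) * (z i - mu) + mu)"

definition hfun :: "(real \<Rightarrow> real) \<Rightarrow> real \<Rightarrow> real" where
  "hfun f x = ln (f x)"

definition kfun :: "(real \<Rightarrow> real) \<Rightarrow> real \<Rightarrow> real \<Rightarrow> real" where
  "kfun f mu x = (x - mu) * deriv (hfun f) x"

definition rfun :: "(real \<Rightarrow> real) \<Rightarrow> real \<Rightarrow> real \<Rightarrow> real" where
  "rfun f mu x = (x - mu)^2 * deriv (deriv (hfun f)) x"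

definition Bratio :: "(real \<Rightarrow> real) \<Rightarrow> real \<Rightarrow> nat \<Rightarrow> real \<Rightarrow> real \<Rightarrow> (nat \<Rightarrow> real) \<Rightarrow> (nat \<Rightarrow> real) \<Rightarrow> real" where
  "Bratio f mu d \<beta> \<beta>' x y = ln ((fd f d (gmap mu x \<beta> \<beta>') powr \<beta>' * fd f d (gmap mu y \<beta>' \<beta>) powr \<beta>)
                              / (fd f d y powr \<beta>' * fd f d x powr \<beta>))"

end

theory Submission
  imports Defs "HOL-Real_Asymp.Real_Asymp"
begin

lemma hfun_derivs:
  fixes f :: "real \<Rightarrow> real"
  assumes pos: "\<forall>x. f x > 0" and C4: "C4 f"
  shows "\<forall>m<4. \<forall>t. ((deriv ^^ m) (hfun f) has_real_derivative (deriv ^^ Suc m) (hfun f) t) (at t)"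
proof -
  define F where "F n = (deriv ^^ n) f" for n
  have dF: "(F n has_real_derivative F (Suc n) x) (at x within S)" if "n < 4" for n x S
    using C4 that unfolding C4_def F_def by (blast intro: has_field_derivative_at_within)
  have F0: "F 0 = f" by (simp add: F_def)
  have fpos: "F 0 x > 0" for x using pos F0 by simp
  have fne: "F 0 x \<noteq> 0" for x using fpos[of x] by simp
  define h1 where "h1 x = F 1 x / F 0 x" for x
  define h2 where "h2 x = F 2 x / F 0 x - (F 1 x)^2 / (F 0 x)^2" for x
  define h3 where "h3 x = F 3 x / F 0 x - 3 * F 1 x * F 2 x / (F 0 x)^2 + 2 * (F 1 x)^3 / (F 0 x)^3" for x
  define h4 where "h4 x = F 4 x / F 0 x - 4 * F 1 x * F 3 x / (F 0 x)^2 - 3 * (F 2 x)^2 / (F 0 x)^2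
       + 12 * (F 1 x)^2 * F 2 x / (F 0 x)^3 - 6 * (F 1 x)^4 / (F 0 x)^4" for x
  have D0: "(hfun f has_real_derivative h1 x) (at x)" for x
  proof -
    have "((\<lambda>x. ln (F 0 x)) has_real_derivative h1 x) (at x)"
      unfolding h1_def
      by (rule derivative_eq_intros dF | simp add: fpos fne field_simps)+
    then show ?thesis by (simp add: hfun_def[abs_def] F0)
  qed
  have D1: "(h1 has_real_derivative h2 x) (at x)" for x
  proof -
    have "((\<lambda>x. F 1 x / F 0 x) has_real_derivative h2 x) (at x)"
      unfolding h2_def
      by (rule derivative_eq_intros dF | simp add: fpos fne)+ (simp add: fne field_simps eval_nat_numeral)
    then show ?thesis by (simp add: h1_def[abs_def])
  qed
  have D2: "(h2 has_real_derivative h3 x) (at x)" for x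
  proof -
    have "((\<lambda>x. F 2 x / F 0 x - (F 1 x)^2 / (F 0 x)^2) has_real_derivative h3 x) (at x)"
      unfolding h3_def
      by (rule derivative_eq_intros dF | simp add: fpos fne)+ (simp add: fne field_simps eval_nat_numeral)
    then show ?thesis by (simp add: h2_def[abs_def])
  qed
  have D3: "(h3 has_real_derivative h4 x) (at x)" for x
  proof -
    have "((\<lambda>x. F 3 x / F 0 x - 3 * F 1 x * F 2 x / (F 0 x)^2 + 2 * (F 1 x)^3 / (F 0 x)^3) has_real_derivative h4 x) (at x)"
      unfolding h4_def
      by (rule derivative_eq_intros dF | simp add: fpos fne)+ (simp add: fne field_simps eval_nat_numeral)
    then show ?thesis by (simp add: h3_def[abs_def])
  qed
  have E1: "(deriv ^^ 1) (hfun f) = h1" using D0 by (auto intro!: ext DERIV_imp_deriv)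
  have E2: "(deriv ^^ 2) (hfun f) = h2" using D1 E1 by (auto simp: numeral_2_eq_2 intro!: ext DERIV_imp_deriv)
  have E3: "(deriv ^^ 3) (hfun f) = h3" using D2 E2 by (auto simp: numeral_3_eq_3 numeral_2_eq_2 intro!: ext DERIV_imp_deriv)
  have E4: "(deriv ^^ 4) (hfun f) = h4"
  proof -
    have "(deriv ^^ 4) (hfun f) = deriv ((deriv ^^ 3) (hfun f))"
      by (simp add: eval_nat_numeral)
    then show ?thesis using D3 E3 by (auto intro!: ext DERIV_imp_deriv)
  qed
  show ?thesis
  proof (intro allI impI)
    fix m t assume "m < (4::nat)"
    then have "m = 0 \<or> m = 1 \<or> m = 2 \<or> m = 3" by auto
    then show "((deriv ^^ m) (hfun f) has_real_derivative (deriv ^^ Suc m) (hfun f) t) (at t)"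
      using D0 D1 D2 D3 E1 E2 E3 E4
      by (auto simp: numeral_2_eq_2 numeral_3_eq_3 eval_nat_numeral)
  qed
qed

lemma taylor_any:
  fixes D :: "nat \<Rightarrow> real \<Rightarrow> real"
  assumes n: "n > 0" and der: "\<forall>m<n. \<forall>t. (D m has_real_derivative D (Suc m) t) (at t)"
  shows "\<exists>\<xi>. D 0 x = (\<Sum>m<n. D m c / fact m * (x - c)^m) + D n \<xi> / fact n * (x - c)^n"
proof (cases "x = c")
  case True
  obtain n' where n': "n = Suc n'" using n by (cases n) auto
  show ?thesis
    by (rule exI[of _ c]) (simp add: True n' sum.lessThan_Suc_shift)
next
  case False
  have "\<exists>t. (if x < c then x < t \<and> t < c else c < t \<and> t < x) \<and>
    D 0 x = (\<Sum>m<n. (D m c / fact m) * (x - c)^m) + (D n t / fact n) * (x - c)^n"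
    by (rule Taylor[of n D "D 0" "min x c" "max x c" c x]) (use n der False in auto)
  then show ?thesis by blast
qed

lemma expand_bound:
  fixes D :: "nat \<Rightarrow> real \<Rightarrow> real"
  assumes der: "\<forall>m<4. \<forall>t. (D m has_real_derivative D (Suc m) t) (at t)"
    and M: "\<forall>t. \<bar>D 4 t\<bar> \<le> M"
    and b1: "\<bar>(t-mu) * D 1 t\<bar> \<le> W" and b2: "\<bar>(t-mu)^2 * D 2 t\<bar> \<le> W"
    and b3: "\<bar>(t-mu)^3 * D 3 t\<bar> \<le> W" and b4: "M * (t-mu)^4 \<le> W"
  shows "\<bar>q * D 0 (s*(t-mu)+mu) - p * D 0 t - (q-p) * D 0 t - c * ((t-mu) * D 1 t)
            - e * ((t-mu)^2 * D 2 t)\<bar>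
         \<le> (\<bar>q*(s-1) - c\<bar> + \<bar>q*(s-1)^2/2 - e\<bar> + \<bar>q*(s-1)^3/6\<bar> + \<bar>q*(s-1)^4/24\<bar>) * W"
proof -
  obtain \<xi> where eq: "D 0 (s*(t-mu)+mu) = (\<Sum>m<4. D m t / fact m * ((s*(t-mu)+mu) - t)^m)
        + D 4 \<xi> / fact 4 * ((s*(t-mu)+mu) - t)^4"
    using taylor_any[of 4 D "s*(t-mu)+mu" t] der by auto
  have f2: "fact 2 = (2::real)" and f3: "fact 3 = (6::real)" and f4: "fact 4 = (24::real)"
    by (simp_all add: fact_numeral)
  have sum4: "(\<Sum>m<4. g m) = g 0 + g 1 + g 2 + (g 3::real)" for g :: "nat \<Rightarrow> real"
    by (simp add: eval_nat_numeral)
  define z where "z = t - mu"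
  have dlt: "(s*(t-mu)+mu) - t = (s-1) * z" by (simp add: z_def algebra_simps)
  have e2: "D 0 (s*(t-mu)+mu) = D 0 t + D 1 t*((s-1)*z) + D 2 t*((s-1)*z)^2/2 + D 3 t*((s-1)*z)^3/6 + D 4 \<xi>*((s-1)*z)^4/24"
    using eq unfolding sum4 dlt f2 f3 f4 by simp
  have key': "q * (D 0 t + D 1 t*((s-1)*z) + D 2 t*((s-1)*z)^2/2 + D 3 t*((s-1)*z)^3/6 + D 4 \<xi>*((s-1)*z)^4/24)
         - p * D 0 t - (q-p) * D 0 t - c * (z * D 1 t) - e * (z^2 * D 2 t)
        = (q*(s-1) - c) * (z * D 1 t) + (q*(s-1)^2/2 - e) * (z^2 * D 2 t)
          + (q*(s-1)^3/6) * (z^3 * D 3 t) + (q*(s-1)^4/24) * (z^4 * D 4 \<xi>)"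
    unfolding power_mult_distrib by (simp add: algebra_simps)
  have key: "q * D 0 (s*(t-mu)+mu) - p * D 0 t - (q-p) * D 0 t - c * ((t-mu) * D 1 t)
            - e * ((t-mu)^2 * D 2 t)
        = (q*(s-1) - c) * (z * D 1 t) + (q*(s-1)^2/2 - e) * (z^2 * D 2 t)
          + (q*(s-1)^3/6) * (z^3 * D 3 t) + (q*(s-1)^4/24) * (z^4 * D 4 \<xi>)"
    using key' unfolding e2 by (simp add: z_def)
  have m4: "\<bar>z^4 * D 4 \<xi>\<bar> \<le> W"
  proof -
    have "\<bar>z^4 * D 4 \<xi>\<bar> = z^4 * \<bar>D 4 \<xi>\<bar>" by (simp add: abs_mult)
    also have "\<dots> \<le> z^4 * M" using M by (intro mult_left_mono) auto
    finally show ?thesis using b4 by (simp add: z_def mult.commute)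
  qed
  have abs4: "\<bar>a1+a2+a3+a4\<bar> \<le> \<bar>a1\<bar>+\<bar>a2\<bar>+\<bar>a3\<bar>+\<bar>a4\<bar>" for a1 a2 a3 a4 :: real by arith
  have t1: "\<bar>a * X\<bar> \<le> \<bar>a\<bar> * W" if "\<bar>X\<bar> \<le> W" for a X :: real
    by (simp add: abs_mult mult_left_mono that)
  have A1: "\<bar>(q*(s-1) - c) * (z * D 1 t)\<bar> \<le> \<bar>q*(s-1) - c\<bar> * W"
    by (rule t1) (use b1 in \<open>simp add: z_def\<close>)
  have A2: "\<bar>(q*(s-1)^2/2 - e) * (z^2 * D 2 t)\<bar> \<le> \<bar>q*(s-1)^2/2 - e\<bar> * W"
    by (rule t1) (use b2 in \<open>simp add: z_def\<close>)
  have A3: "\<bar>(q*(s-1)^3/6) * (z^3 * D 3 t)\<bar> \<le> \<bar>q*(s-1)^3/6\<bar> * W"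
    by (rule t1) (use b3 in \<open>simp add: z_def\<close>)
  have A4: "\<bar>(q*(s-1)^4/24) * (z^4 * D 4 \<xi>)\<bar> \<le> \<bar>q*(s-1)^4/24\<bar> * W"
    by (rule t1) (rule m4)
  have S: "\<bar>(q*(s-1) - c) * (z * D 1 t) + (q*(s-1)^2/2 - e) * (z^2 * D 2 t)
          + (q*(s-1)^3/6) * (z^3 * D 3 t) + (q*(s-1)^4/24) * (z^4 * D 4 \<xi>)\<bar>
        \<le> \<bar>q*(s-1) - c\<bar> * W + \<bar>q*(s-1)^2/2 - e\<bar> * W + \<bar>q*(s-1)^3/6\<bar> * W + \<bar>q*(s-1)^4/24\<bar> * W"
    by (rule order_trans[OF abs4]) (intro add_mono A1 A2 A3 A4)
  show ?thesis unfolding key using S by (simp only: distrib_right)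
qed

lemma pw_le: fixes u :: real assumes "u \<ge> 0" "j \<le> n" shows "u^j \<le> (1+u)^n"
proof -
  have "u^j \<le> (1+u)^j" by (rule power_mono) (use assms in auto)
  also have "\<dots> \<le> (1+u)^n" by (rule power_increasing) (use assms in auto)
  finally show ?thesis .
qed

lemma cmb3: fixes u a b c m :: real assumes "u \<ge> 0" "a \<ge> 0" "b \<ge> 0" "c \<ge> 0" "m \<ge> 0"
  shows "a + b*u + c*u^2 + m*u^3 \<le> (a+b+c+m)*(1+u)^3"
proof -
  have "a*u^0 \<le> a*(1+u)^3" by (rule mult_left_mono[OF pw_le]) (use assms in auto)
  moreover have "b*u^1 \<le> b*(1+u)^3" by (rule mult_left_mono[OF pw_le]) (use assms in auto)
  moreover have "c*u^2 \<le> c*(1+u)^3" by (rule mult_left_mono[OF pw_le]) (use assms in auto)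
  moreover have "m*u^3 \<le> m*(1+u)^3" by (rule mult_left_mono[OF pw_le]) (use assms in auto)
  ultimately show ?thesis by (simp add: algebra_simps)
qed

lemma poly_bounds:
  fixes D :: "nat \<Rightarrow> real \<Rightarrow> real" and mu t M :: real
  assumes der: "\<forall>m<4. \<forall>t. (D m has_real_derivative D (Suc m) t) (at t)"
    and M: "\<forall>t. \<bar>D 4 t\<bar> \<le> M"
  defines "A \<equiv> \<bar>D 1 mu\<bar> + \<bar>D 2 mu\<bar> + \<bar>D 3 mu\<bar> + M"
  shows "\<bar>(t-mu) * D 1 t\<bar> \<le> A*(1+\<bar>t-mu\<bar>)^4" "\<bar>(t-mu)^2 * D 2 t\<bar> \<le> A*(1+\<bar>t-mu\<bar>)^4"
    "\<bar>(t-mu)^3 * D 3 t\<bar> \<le> A*(1+\<bar>t-mu\<bar>)^4" "M*(t-mu)^4 \<le> A*(1+\<bar>t-mu\<bar>)^4"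
proof -
  define u where "u = \<bar>t - mu\<bar>"
  have u0: "u \<ge> 0" by (simp add: u_def)
  have M0: "M \<ge> 0" using M by (meson abs_ge_zero order.trans)
  have A0: "A \<ge> 0" using M0 by (simp add: A_def)
  have f2: "fact 2 = (2::real)" and f3: "fact 3 = (6::real)"
    by (simp_all add: fact_numeral)
  obtain \<xi>1 where e1: "D 1 t = (\<Sum>m<3. D (Suc m) mu / fact m * (t - mu)^m) + D 4 \<xi>1 / fact 3 * (t - mu)^3"
    using taylor_any[of 3 "\<lambda>m. D (Suc m)" t mu] der by (auto simp: eval_nat_numeral)
  have e1': "D 1 t = D 1 mu + D 2 mu * (t-mu) + D 3 mu * (t-mu)^2/2 + D 4 \<xi>1 * (t-mu)^3/6"
    using e1 by (simp add: eval_nat_numeral f2 f3)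
  have "\<bar>D 1 t\<bar> \<le> \<bar>D 1 mu\<bar> + \<bar>D 2 mu\<bar> * u + \<bar>D 3 mu\<bar> * u^2 + M * u^3"
  proof -
    have "\<bar>D 3 mu * (t-mu)^2/2\<bar> \<le> \<bar>D 3 mu\<bar> * u^2" by (simp add: u_def abs_mult power_abs)
    moreover have "\<bar>D 4 \<xi>1 * (t-mu)^3/6\<bar> \<le> M * u^3"
    proof -
      have n: "0 \<le> \<bar>D 4 \<xi>1\<bar> * u^3" using u0 by simp
      have "\<bar>D 4 \<xi>1 * (t-mu)^3/6\<bar> = \<bar>D 4 \<xi>1\<bar> * u^3 / 6" by (simp add: u_def abs_mult power_abs)
      also have "\<dots> \<le> \<bar>D 4 \<xi>1\<bar> * u^3" using n by linarith
      also have "\<dots> \<le> M * u^3" by (rule mult_right_mono) (use M u0 in auto)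
      finally show ?thesis .
    qed
    moreover have "\<bar>D 2 mu * (t-mu)\<bar> = \<bar>D 2 mu\<bar> * u" by (simp add: u_def abs_mult)
    ultimately show ?thesis unfolding e1' by linarith
  qed
  also have "\<dots> \<le> A*(1+u)^3" unfolding A_def by (rule cmb3) (use u0 M0 in auto)
  finally have B1: "\<bar>D 1 t\<bar> \<le> A*(1+u)^3" .
  obtain \<xi>2 where e2: "D 2 t = (\<Sum>m<2. D (Suc (Suc m)) mu / fact m * (t - mu)^m) + D 4 \<xi>2 / fact 2 * (t - mu)^2"
    using taylor_any[of 2 "\<lambda>m. D (Suc (Suc m))" t mu] der by (auto simp: eval_nat_numeral)
  have e2': "D 2 t = D 2 mu + D 3 mu * (t-mu) + D 4 \<xi>2 * (t-mu)^2/2"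
    using e2 by (simp add: eval_nat_numeral f2)
  have "\<bar>D 2 t\<bar> \<le> \<bar>D 2 mu\<bar> + \<bar>D 3 mu\<bar> * u + M * u^2"
  proof -
    have "\<bar>D 4 \<xi>2 * (t-mu)^2/2\<bar> \<le> M * u^2"
    proof -
      have n: "0 \<le> \<bar>D 4 \<xi>2\<bar> * u^2" using u0 by simp
      have "\<bar>D 4 \<xi>2 * (t-mu)^2/2\<bar> = \<bar>D 4 \<xi>2\<bar> * u^2 / 2" by (simp add: u_def abs_mult power_abs)
      also have "\<dots> \<le> \<bar>D 4 \<xi>2\<bar> * u^2" using n by linarith
      also have "\<dots> \<le> M * u^2" by (rule mult_right_mono) (use M u0 in auto)
      finally show ?thesis .
    qed
    moreover have "\<bar>D 3 mu * (t-mu)\<bar> = \<bar>D 3 mu\<bar> * u" by (simp add: u_def abs_mult)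
    ultimately show ?thesis unfolding e2' by linarith
  qed
  also have "\<dots> \<le> A*(1+u)^2"
  proof -
    have "\<bar>D 2 mu\<bar>*u^0 \<le> \<bar>D 2 mu\<bar>*(1+u)^2" by (rule mult_left_mono[OF pw_le]) (use u0 in auto)
    moreover have "\<bar>D 3 mu\<bar> * u^1 \<le> \<bar>D 3 mu\<bar>*(1+u)^2" by (rule mult_left_mono[OF pw_le]) (use u0 in auto)
    moreover have "M * u^2 \<le> M*(1+u)^2" by (rule mult_left_mono[OF pw_le]) (use u0 M0 in auto)
    moreover have "\<bar>D 1 mu\<bar> * (1+u)^2 \<ge> 0" by simp
    ultimately show ?thesis unfolding A_def distrib_right power_0 power_one_right mult_1_right by linarith
  qed
  finally have B2: "\<bar>D 2 t\<bar> \<le> A*(1+u)^2" .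
  obtain \<xi>3 where e3: "D 3 t = (\<Sum>m<1. D (Suc (Suc (Suc m))) mu / fact m * (t - mu)^m) + D 4 \<xi>3 / fact 1 * (t - mu)^1"
    using taylor_any[of 1 "\<lambda>m. D (Suc (Suc (Suc m)))" t mu] der by (auto simp: eval_nat_numeral)
  have e3': "D 3 t = D 3 mu + D 4 \<xi>3 * (t-mu)"
    using e3 by (simp add: eval_nat_numeral)
  have "\<bar>D 3 t\<bar> \<le> \<bar>D 3 mu\<bar> + M * u"
  proof -
    have "\<bar>D 4 \<xi>3 * (t-mu)\<bar> \<le> M * u"
      using M mult_right_mono[of "\<bar>D 4 \<xi>3\<bar>" M "u"] u0 by (simp add: u_def abs_mult)
    then show ?thesis unfolding e3' by linarith
  qed
  also have "\<dots> \<le> A*(1+u)"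
  proof -
    have "\<bar>D 3 mu\<bar>*1 \<le> \<bar>D 3 mu\<bar>*(1+u)" by (rule mult_left_mono) (use u0 in auto)
    moreover have "M * u \<le> M*(1+u)" by (rule mult_left_mono) (use u0 M0 in auto)
    moreover have "(\<bar>D 1 mu\<bar> + \<bar>D 2 mu\<bar>) * (1+u) \<ge> 0" using u0 by simp
    ultimately show ?thesis unfolding A_def distrib_right power_0 power_one_right mult_1_right by linarith
  qed
  finally have B3: "\<bar>D 3 t\<bar> \<le> A*(1+u)" .
  have g: "u^j * (A*(1+u)^(4-j)) \<le> A*(1+u)^4" if "j \<le> 4" for j
  proof -
    have "u^j * (A*(1+u)^(4-j)) \<le> (1+u)^j * (A*(1+u)^(4-j))"
      by (rule mult_right_mono) (use pw_le[of u j j] u0 A0 in auto)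
    also have "\<dots> = A*(1+u)^4" using that by (simp add: power_add[symmetric] algebra_simps)
    finally show ?thesis .
  qed
  show "\<bar>(t-mu) * D 1 t\<bar> \<le> A*(1+\<bar>t-mu\<bar>)^4"
  proof -
    have "\<bar>(t-mu) * D 1 t\<bar> \<le> u^1 * (A*(1+u)^(4-1))" using B1 u0
      by (simp add: abs_mult u_def[symmetric] mult_left_mono)
    then show ?thesis using g[of 1] by (simp add: u_def)
  qed
  show "\<bar>(t-mu)^2 * D 2 t\<bar> \<le> A*(1+\<bar>t-mu\<bar>)^4"
  proof -
    have "\<bar>(t-mu)^2 * D 2 t\<bar> \<le> u^2 * (A*(1+u)^(4-2))" using B2 u0
      by (simp add: abs_mult power_abs u_def[symmetric] mult_left_mono)
    then show ?thesis using g[of 2] by (simp add: u_def)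
  qed
  show "\<bar>(t-mu)^3 * D 3 t\<bar> \<le> A*(1+\<bar>t-mu\<bar>)^4"
  proof -
    have "\<bar>(t-mu)^3 * D 3 t\<bar> \<le> u^3 * (A*(1+u)^(4-3))" using B3 u0
      by (simp add: abs_mult power_abs u_def[symmetric] mult_left_mono)
    then show ?thesis using g[of 3] by (simp add: u_def)
  qed
  show "M*(t-mu)^4 \<le> A*(1+\<bar>t-mu\<bar>)^4"
  proof -
    have "M \<le> A" using A_def by simp
    have "M*(t-mu)^4 = M * u^4" by (simp add: u_def power_even_abs_numeral)
    also have "\<dots> \<le> A * u^4" using \<open>M \<le> A\<close> u0 by (simp add: mult_right_mono)
    also have "\<dots> \<le> A * (1+u)^4" by (rule mult_left_mono[OF pw_le]) (use u0 A0 in auto)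
    finally show ?thesis by (simp add: u_def)
  qed
qed

lemma tail_bound:
  fixes G :: "real \<Rightarrow> real" and m \<alpha> \<beta> :: real
  assumes mono: "\<forall>a b. m \<le> a \<and> a \<le> b \<longrightarrow> G a \<le> G b"
    and lim: "((\<lambda>t. G (t*2) / G t) \<longlongrightarrow> 2 powr \<alpha>) at_top"
    and \<alpha>: "\<alpha> > 0" and \<beta>: "\<beta> > 0"
  shows "\<exists>T C. T \<ge> 1 \<and> (\<forall>t\<ge>T. t^6 * exp (-\<beta> * G t) \<le> C)"
proof -
  define q where "q = (1 + 2 powr \<alpha>) / 2"
  have p1: "2 powr \<alpha> > 1" using \<alpha> by (simp add: gr_one_powr)
  have q1: "q > 1" and q2: "q < 2 powr \<alpha>" using p1 by (auto simp: q_def)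
  have "eventually (\<lambda>t. G (t*2) / G t > q) at_top"
    using order_tendstoD(1)[OF lim q2] .
  then obtain T0 where T0: "\<And>t. t \<ge> T0 \<Longrightarrow> G (t*2) / G t > q"
    by (auto simp: eventually_at_top_linorder)
  define T1 where "T1 = max T0 (max m 1)"
  have T1: "T1 \<ge> 1" "T1 \<ge> m" "T1 \<ge> T0" by (auto simp: T1_def)
  have posr: "G t > 0 \<and> G (t*2) > q * G t" if "t \<ge> T1" for t
  proof -
    have r: "G (t*2) / G t > q" using T0 T1 that by auto
    have mo: "G t \<le> G (t*2)" using mono T1 that by auto
    have "G t > 0"
    proof (rule ccontr)
      assume "\<not> G t > 0"
      then consider "G t = 0" | "G t < 0" by linarith
      then show False
      proof cases
        case 1 then show False using r q1 by simp
      next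
        case 2
        then have "G (t*2) < q * G t" using r by (simp add: less_divide_eq mult.commute)
        also have "q * G t < G t" using 2 q1 by (simp add: mult_less_cancel_right1)
        finally show False using mo by simp
      qed
    qed
    then show ?thesis using r by (simp add: less_divide_eq)
  qed
  have iter: "G (T1 * 2^k) \<ge> q^k * G T1" for k
  proof (induction k)
    case 0 then show ?case by simp
  next
    case (Suc k)
    have "T1 * 2^k \<ge> T1" using T1 by simp
    then have a: "G (T1 * 2^k * 2) > q * G (T1 * 2^k)" using posr by blast
    have b: "q * G (T1 * 2^k) \<ge> q^Suc k * G T1" using Suc q1 by (simp add: mult.assoc)
    have e: "T1 * 2^Suc k = T1 * 2^k * 2" by simp
    show ?case unfolding e using a b by linarith
  qed
  define L where "L = ln 64 / (\<beta> * (q - 1))"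
  have L0: "L > 0" using q1 \<beta> by (simp add: L_def)
  have GT1: "G T1 > 0" using posr T1 by auto
  obtain k where k: "L / G T1 < q^k" using real_arch_pow[OF q1] by blast
  define T where "T = T1 * 2^k"
  have TT1: "T \<ge> T1" using T1 by (simp add: T_def)
  have GT: "G T \<ge> L"
  proof -
    have "L < q^k * G T1" using k GT1 by (simp add: divide_less_eq)
    then show ?thesis using iter[of k] by (simp add: T_def)
  qed
  have GL: "G s \<ge> L" if "s \<ge> T" for s using mono GT TT1 T1 that by (meson order_trans)
  have ex1: "exp (-\<beta> * G s) \<le> 1" if "s \<ge> T" for s using GL[OF that] L0 \<beta> by simp
  define C where "C = (2*T)^6"
  have claim: "\<forall>t. T \<le> t \<and> t \<le> T * 2^n \<longrightarrow> t^6 * exp (-\<beta> * G t) \<le> C" for n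
  proof (induction n)
    case 0
    show ?case
    proof (intro allI impI)
      fix t assume t: "T \<le> t \<and> t \<le> T * 2^0"
      then have "t^6 * exp (-\<beta> * G t) \<le> t^6 * 1" using ex1[of t] by (intro mult_left_mono) auto
      also have "\<dots> \<le> C" unfolding C_def mult_1_right using t TT1 T1 by (intro power_mono) auto
      finally show "t^6 * exp (-\<beta> * G t) \<le> C" .
    qed
  next
    case (Suc n)
    show ?case
    proof (intro allI impI)
      fix t assume t: "T \<le> t \<and> t \<le> T * 2^Suc n"
      show "t^6 * exp (-\<beta> * G t) \<le> C"
      proof (cases "t \<le> 2*T")
        case True
        then have "t^6 * exp (-\<beta> * G t) \<le> t^6 * 1" using ex1[of t] t by (intro mult_left_mono) auto
        also have "\<dots> \<le> C" unfolding C_def mult_1_right using t True TT1 T1 by (intro power_mono) auto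
        finally show ?thesis .
      next
        case False
        define s where "s = t/2"
        have s: "T \<le> s" "s \<le> T * 2^n" using False t by (auto simp: s_def)
        have ts: "t = s*2" by (simp add: s_def)
        have Gs: "G t > q * G s" using posr[of s] s TT1 unfolding ts by auto
        have IH: "s^6 * exp (-\<beta> * G s) \<le> C" using Suc s by blast
        have "exp (-\<beta> * G t) \<le> exp (-\<beta> * (q * G s))" using Gs \<beta> by simp
        also have "\<dots> = exp (-\<beta> * G s) * exp (-(\<beta> * (q-1) * G s))"
          by (simp add: exp_add[symmetric] algebra_simps)
        also have "\<dots> \<le> exp (-\<beta> * G s) * exp (-(\<beta> * (q-1) * L))"
          using GL[OF s(1)] q1 \<beta> by (intro mult_left_mono) auto
        also have "exp (-(\<beta> * (q-1) * L)) = 1/64"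
          using q1 \<beta> by (simp add: L_def exp_minus exp_ln)
        finally have e: "exp (-\<beta> * G t) \<le> exp (-\<beta> * G s) / 64" by simp
        have "t^6 * exp (-\<beta> * G t) \<le> t^6 * (exp (-\<beta> * G s) / 64)"
          by (rule mult_left_mono[OF e]) simp
        also have "\<dots> = s^6 * exp (-\<beta> * G s)" by (simp add: ts power_mult_distrib)
        also have "\<dots> \<le> C" by (rule IH)
        finally show ?thesis .
      qed
    qed
  qed
  show ?thesis
  proof (intro exI conjI allI impI)
    show "T \<ge> 1" using TT1 T1 by simp
    fix t assume t: "t \<ge> T"
    obtain n where n: "t / T < 2^n" using real_arch_pow[of 2 "t/T"] by auto
    have "T > 0" using TT1 T1 by simp
    then have "t \<le> T * 2^n" using n by (simp add: divide_less_eq mult.commute)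
    then show "t^6 * exp (-\<beta> * G t) \<le> C" using claim t by blast
  qed
qed

lemma int_inv_sq: "integrable lborel (\<lambda>x::real. K * inverse (1 + x^2))"
proof -
  have "integrable lborel (\<lambda>x::real. inverse (1 + x^2))"
    using integrable_inverse_1_plus_square by (simp add: set_integrable_def)
  then show ?thesis by simp
qed

lemma powr_as_exp: "(y::real) > 0 \<Longrightarrow> y powr b = exp (- b * (- ln y))"
  by (simp add: powr_def)

lemma weighted_integrable:
  fixes f :: "real \<Rightarrow> real" and mu b :: real
  assumes pos: "\<forall>x. f x > 0" and contf: "continuous_on UNIV f"
    and unimodal: "unimodal_at f mu"
    and regvar: "regularly_varying (\<lambda>t. - ln (f t))"
    and b: "b > 0"
  shows "integrable lborel (\<lambda>t. (1 + \<bar>t - mu\<bar>)^4 * f t powr b)"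
proof -
  define H where "H t = - ln (f t)" for t
  obtain \<alpha> where \<alpha>: "\<alpha> > 0" and lim: "((\<lambda>t. H (t * 2) / H t) \<longlongrightarrow> 2 powr \<alpha>) at_infinity"
    using regvar unfolding regularly_varying_def H_def by fastforce
  have fH: "f t powr b = exp (- b * H t)" for t using pos[rule_format, of t] by (simp add: powr_def H_def)
  have fmax: "f t \<le> f mu" for t
    using unimodal unfolding unimodal_at_def by (cases "t \<le> mu") auto
  have monoR: "\<forall>a c. mu \<le> a \<and> a \<le> c \<longrightarrow> H a \<le> H c"
    using unimodal pos unfolding unimodal_at_def H_def by auto
  have monoL: "\<forall>a c. -mu \<le> a \<and> a \<le> c \<longrightarrow> H (-a) \<le> H (-c)"
    using unimodal pos unfolding unimodal_at_def H_def by auto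
  have limR: "((\<lambda>t. H (t * 2) / H t) \<longlongrightarrow> 2 powr \<alpha>) at_top"
    using lim at_top_le_at_infinity by (rule tendsto_mono[rotated])
  have limL: "((\<lambda>t. H (-(t * 2)) / H (-t)) \<longlongrightarrow> 2 powr \<alpha>) at_top"
  proof -
    have "filterlim (\<lambda>t::real. -t) at_infinity at_top"
      using filterlim_uminus_at_bot_at_top at_bot_le_at_infinity by (rule filterlim_mono) auto
    from filterlim_compose[OF lim this]
    have "((\<lambda>t. H ((-t) * 2) / H (-t)) \<longlongrightarrow> 2 powr \<alpha>) at_top" by simp
    then show ?thesis by simp
  qed
  obtain TR CR where TR: "TR \<ge> 1" "\<forall>t\<ge>TR. t^6 * exp (-b * H t) \<le> CR"
    using tail_bound[OF monoR limR \<alpha> b] by blast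
  obtain TL CL where TL: "TL \<ge> 1" "\<forall>t\<ge>TL. t^6 * exp (-b * H (-t)) \<le> CL"
    using tail_bound[of "-mu" "\<lambda>t. H (-t)", OF monoL limL \<alpha> b] by blast
  define T where "T = max TR TL"
  define C where "C = max CR CL"
  have T1: "T \<ge> 1" using TR by (simp add: T_def)
  have tail: "t^6 * f t powr b \<le> C" if "\<bar>t\<bar> \<ge> T" for t
  proof (cases "t \<ge> 0")
    case True
    then have "t \<ge> TR" using that by (simp add: T_def)
    then have "t^6 * f t powr b \<le> CR" using TR fH by simp
    then show ?thesis by (simp add: C_def)
  next
    case False
    then have "-t \<ge> TL" using that by (simp add: T_def)
    then have "(-t)^6 * exp (-b * H (-(-t))) \<le> CL" using TL by blast
    then have "t^6 * f t powr b \<le> CL" using fH by simp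
    then show ?thesis by (simp add: C_def)
  qed
  have C0: "C \<ge> 0"
  proof -
    have "0 \<le> T^6 * f T powr b" by simp
    also have "\<dots> \<le> C" using tail[of T] T1 by simp
    finally show ?thesis .
  qed
  define c0 where "c0 = (2 + \<bar>mu\<bar>)^4"
  define K where "K = 2 * c0 * C + (1 + T + \<bar>mu\<bar>)^4 * f mu powr b * (1 + T^2)"
  have bound: "(1 + \<bar>t - mu\<bar>)^4 * f t powr b * (1 + t^2) \<le> K" for t
  proof (cases "\<bar>t\<bar> \<ge> T")
    case True
    have t1: "\<bar>t\<bar> \<ge> 1" using True T1 by linarith
    have "1 + \<bar>t - mu\<bar> \<le> (2 + \<bar>mu\<bar>) * \<bar>t\<bar>"
    proof -
      have "1 + \<bar>t - mu\<bar> \<le> \<bar>t\<bar> + \<bar>t\<bar> + \<bar>mu\<bar>" using t1 by linarith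
      also have "\<dots> \<le> (2 + \<bar>mu\<bar>) * \<bar>t\<bar>" using t1 by (simp add: algebra_simps mult_left_mono_neg)
        (metis abs_ge_zero mult.commute mult_left_mono mult_cancel_right1 order.trans order_refl)
      finally show ?thesis .
    qed
    then have "(1 + \<bar>t - mu\<bar>)^4 \<le> ((2 + \<bar>mu\<bar>) * \<bar>t\<bar>)^4"
      by (intro power_mono) auto
    also have "\<dots> = c0 * t^4" unfolding c0_def power_mult_distrib by (simp add: power_even_abs_numeral)
    finally have w: "(1 + \<bar>t - mu\<bar>)^4 \<le> c0 * t^4" .
    have "1*1 \<le> \<bar>t\<bar>*\<bar>t\<bar>" by (rule mult_mono) (use t1 in auto)
    then have "1 \<le> t^2" by (simp add: power2_eq_square)
    then have s2: "1 + t^2 \<le> 2 * t^2" by simp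
    have "(1 + \<bar>t - mu\<bar>)^4 * f t powr b * (1 + t^2) \<le> (c0 * t^4) * f t powr b * (2 * t^2)"
      using w s2 by (intro mult_mono) (auto simp: c0_def)
    also have "\<dots> = 2 * c0 * (t^6 * f t powr b)" by (simp add: algebra_simps eval_nat_numeral)
    also have "\<dots> \<le> 2 * c0 * C" using tail[OF True] by (intro mult_left_mono) (auto simp: c0_def)
    also have "\<dots> \<le> K" unfolding K_def by simp
    finally show ?thesis .
  next
    case False
    have "(1 + \<bar>t - mu\<bar>)^4 \<le> (1 + T + \<bar>mu\<bar>)^4" using False by (intro power_mono) auto
    moreover have "f t powr b \<le> f mu powr b" using fmax pos b by (intro powr_mono2) (auto simp: less_imp_le)
    moreover have "1 + t^2 \<le> 1 + T^2"
    proof -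
      have "\<bar>t\<bar>^2 \<le> T^2" using False T1 by (intro power_mono) auto
      then show ?thesis by simp
    qed
    ultimately have "(1 + \<bar>t - mu\<bar>)^4 * f t powr b * (1 + t^2) \<le> (1 + T + \<bar>mu\<bar>)^4 * f mu powr b * (1 + T^2)"
      by (intro mult_mono) auto
    also have "\<dots> \<le> K" unfolding K_def using C0 by (simp add: c0_def)
    finally show ?thesis .
  qed
  show ?thesis
  proof (rule Bochner_Integration.integrable_bound[OF int_inv_sq[of K]])
    show "(\<lambda>t. (1 + \<bar>t - mu\<bar>)^4 * f t powr b) \<in> borel_measurable lborel"
    proof -
      have [measurable]: "f \<in> borel_measurable borel" by (rule borel_measurable_continuous_onI[OF contf])
      show ?thesis by measurable
    qed
    show "AE t in lborel. norm ((1 + \<bar>t - mu\<bar>)^4 * f t powr b) \<le> norm (K * inverse (1 + t^2))"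
    proof (intro AE_I2)
      fix t
      have p: "1 + (t::real)^2 > 0" by (metis add_pos_nonneg zero_less_one zero_le_power2)
      have "(1 + \<bar>t - mu\<bar>)^4 * f t powr b \<le> K * inverse (1 + t^2)"
        using bound[of t] p by (simp add: field_simps)
      then show "norm ((1 + \<bar>t - mu\<bar>)^4 * f t powr b) \<le> norm (K * inverse (1 + t^2))" by simp
    qed
  qed
qed

lemma ps_lborel: "product_sigma_finite (\<lambda>_::nat. lborel :: real measure)"
  by (simp add: product_sigma_finite_def lborel.sigma_finite_measure_axioms)

lemma fd_powr: "(\<forall>x. f x > 0) \<Longrightarrow> fd f d x powr b = (\<Prod>i<d. f (x i) powr b)"
  unfolding fd_def by (rule prod_powr_distrib)

lemma prob_bound:
  fixes f \<phi> w :: "real \<Rightarrow> real" and b c e :: real and d :: nat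
  assumes pos: "\<forall>x. f x > 0" and fm[measurable]: "f \<in> borel_measurable borel"
    and phim[measurable]: "\<phi> \<in> borel_measurable borel" and wm[measurable]: "w \<in> borel_measurable borel"
    and intf: "integrable lborel (\<lambda>t. f t powr b)"
    and intw: "integrable lborel (\<lambda>t. w t * f t powr b)"
    and phi: "\<forall>t. \<bar>\<phi> t\<bar> \<le> c * w t" and e: "e > 0"
    and Z1pos: "(\<integral>t. f t powr b \<partial>lborel) > 0"
  shows "measure (tempered f d b) {x \<in> space (tempered f d b). e < \<bar>\<Sum>i<d. \<phi> (x i)\<bar>}
     \<le> d * c * (\<integral>t. w t * f t powr b \<partial>lborel) / ((\<integral>t. f t powr b \<partial>lborel) * e)"
proof -
  interpret ps: product_sigma_finite "\<lambda>_::nat. lborel :: real measure" by (rule ps_lborel)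
  define Z1 where "Z1 = (\<integral>t. f t powr b \<partial>lborel)"
  define W where "W = (\<integral>t. w t * f t powr b \<partial>lborel)"
  define P where "P = (\<integral>t. \<bar>\<phi> t\<bar> * f t powr b \<partial>lborel)"
  have Z1p: "Z1 > 0" using Z1pos by (simp add: Z1_def)
  have intP: "integrable lborel (\<lambda>t. \<bar>\<phi> t\<bar> * f t powr b)"
  proof (rule Bochner_Integration.integrable_bound[OF integrable_mult_left[OF intw, of c]])
    show "(\<lambda>t. \<bar>\<phi> t\<bar> * f t powr b) \<in> borel_measurable lborel" by measurable
    show "AE x in lborel. norm (\<bar>\<phi> x\<bar> * f x powr b) \<le> norm (w x * f x powr b * c)"
    proof (intro AE_I2)
      fix x
      have "\<bar>\<phi> x\<bar> * f x powr b \<le> c * w x * f x powr b" using phi by (intro mult_right_mono) auto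
      moreover have "0 \<le> \<bar>\<phi> x\<bar> * f x powr b" by simp
      ultimately show "norm (\<bar>\<phi> x\<bar> * f x powr b) \<le> norm (w x * f x powr b * c)" by (simp add: algebra_simps)
    qed
  qed
  have PW: "P \<le> c * W"
  proof -
    have i2: "integrable lborel (\<lambda>t. c * (w t * f t powr b))" using intw by simp
    have "P \<le> (\<integral>t. c * (w t * f t powr b) \<partial>lborel)" unfolding P_def
    proof (rule integral_mono[OF intP i2])
      fix t show "\<bar>\<phi> t\<bar> * f t powr b \<le> c * (w t * f t powr b)"
        using phi mult_right_mono[of "\<bar>\<phi> t\<bar>" "c * w t" "f t powr b"] by (simp add: mult.assoc)
    qed
    then show ?thesis by (simp add: W_def)
  qed
  define Zd where "Zd = (\<integral>z. fd f d z powr b \<partial>leb d)"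
  have Zd: "Zd = Z1 ^ d"
  proof -
    have "Zd = (\<integral>z. (\<Prod>i<d. f (z i) powr b) \<partial>leb d)" unfolding Zd_def using fd_powr[OF pos] by simp
    also have "\<dots> = (\<Prod>i<d. Z1)" unfolding leb_def Z1_def
      by (rule ps.product_integral_prod) (auto intro: intf)
    finally show ?thesis by simp
  qed
  have Zdp: "Zd > 0" using Z1p Zd by simp
  define F where "F i j = (if j = i then (\<lambda>t. \<bar>\<phi> t\<bar> * f t powr b) else (\<lambda>t. f t powr b))" for i j :: nat
  have Fprod: "(\<Prod>j<d. F i j (x j)) = \<bar>\<phi> (x i)\<bar> * (\<Prod>j<d. f (x j) powr b)" if "i < d" for i x
  proof -
    have "(\<Prod>j<d. F i j (x j)) = F i i (x i) * (\<Prod>j\<in>{..<d}-{i}. F i j (x j))"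
      using that by (subst prod.remove[of _ i]) auto
    also have "(\<Prod>j\<in>{..<d}-{i}. F i j (x j)) = (\<Prod>j\<in>{..<d}-{i}. f (x j) powr b)"
      by (rule prod.cong) (auto simp: F_def)
    also have "(\<Prod>j<d. f (x j) powr b) = f (x i) powr b * (\<Prod>j\<in>{..<d}-{i}. f (x j) powr b)"
      using that by (subst prod.remove[of _ i]) auto
    ultimately show ?thesis by (simp add: F_def)
  qed
  have Fint: "(\<integral>x. (\<Prod>j<d. F i j (x j)) \<partial>leb d) = P * Z1 ^ (d - 1)" if "i < d" for i
  proof -
    have "(\<integral>x. (\<Prod>j<d. F i j (x j)) \<partial>leb d) = (\<Prod>j<d. integral\<^sup>L lborel (F i j))"
      unfolding leb_def by (rule ps.product_integral_prod) (auto simp: F_def intf intP)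
    also have "\<dots> = integral\<^sup>L lborel (F i i) * (\<Prod>j\<in>{..<d}-{i}. integral\<^sup>L lborel (F i j))"
      using that by (subst prod.remove[of _ i]) auto
    also have "(\<Prod>j\<in>{..<d}-{i}. integral\<^sup>L lborel (F i j)) = (\<Prod>j\<in>{..<d}-{i}. Z1)"
      by (rule prod.cong) (auto simp: F_def Z1_def)
    also have "\<dots> = Z1 ^ (d - 1)" using that by simp
    finally show ?thesis by (simp add: F_def P_def)
  qed
  have Fintg: "integrable (leb d) (\<lambda>x. \<Prod>j<d. F i j (x j))" for i
    unfolding leb_def by (rule ps.product_integrable_prod) (auto simp: F_def intf intP)
  define u where "u x = (\<Sum>i<d. (\<Prod>j<d. F i j (x j))) / (Zd * e)" for x
  have u_eq: "u x = fd f d x powr b / Zd * (\<Sum>i<d. \<bar>\<phi> (x i)\<bar>) / e" for x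
  proof -
    have "(\<Sum>i<d. (\<Prod>j<d. F i j (x j))) = (\<Sum>i<d. \<bar>\<phi> (x i)\<bar> * (\<Prod>j<d. f (x j) powr b))"
      by (rule sum.cong) (auto simp: Fprod)
    then show ?thesis unfolding u_def fd_powr[OF pos] by (simp add: sum_distrib_right field_simps)
  qed
  have uint: "integrable (leb d) u" unfolding u_def
    by (intro integrable_divide Bochner_Integration.integrable_sum Fintg)
  have uval: "(\<integral>x. u x \<partial>leb d) = d * P / (Z1 * e)"
  proof -
    have "(\<integral>x. u x \<partial>leb d) = (\<Sum>i<d. (\<integral>x. (\<Prod>j<d. F i j (x j)) \<partial>leb d)) / (Zd * e)"
      unfolding u_def by (simp add: integral_sum Fintg)
    also have "\<dots> = (\<Sum>i<d. P * Z1 ^ (d - 1)) / (Zd * e)"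
      by (intro arg_cong2[where f="(/)"] sum.cong) (auto simp: Fint)
    also have "\<dots> = d * P / (Z1 * e)"
    proof (cases d)
      case 0 then show ?thesis by simp
    next
      case (Suc n)
      then show ?thesis using Z1p e by (simp add: Zd field_simps)
    qed
    finally show ?thesis .
  qed
  have u0: "u x \<ge> 0" for x
    unfolding u_eq using Zdp e by (intro mult_nonneg_nonneg divide_nonneg_nonneg sum_nonneg) auto
  define A where "A = {x \<in> space (tempered f d b). e < \<bar>\<Sum>i<d. \<phi> (x i)\<bar>}"
  have sp: "space (tempered f d b) = space (leb d)" by (simp add: tempered_def)
  have gm: "(\<lambda>x. ennreal (fd f d x powr b / (\<integral>z. fd f d z powr b \<partial>leb d))) \<in> borel_measurable (leb d)"
    unfolding fd_def leb_def by measurable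
  have Ameas: "A \<in> sets (leb d)" unfolding A_def sp unfolding leb_def by measurable
  have "emeasure (tempered f d b) A
      = (\<integral>\<^sup>+x. ennreal (fd f d x powr b / Zd) * indicator A x \<partial>leb d)"
    unfolding tempered_def Zd_def by (rule emeasure_density[OF gm Ameas])
  also have "\<dots> \<le> (\<integral>\<^sup>+x. ennreal (u x) \<partial>leb d)"
  proof (rule nn_integral_mono)
    fix x assume x: "x \<in> space (leb d)"
    show "ennreal (fd f d x powr b / Zd) * indicator A x \<le> ennreal (u x)"
    proof (cases "x \<in> A")
      case True
      then have "e < \<bar>\<Sum>i<d. \<phi> (x i)\<bar>" by (simp add: A_def)
      also have "\<dots> \<le> (\<Sum>i<d. \<bar>\<phi> (x i)\<bar>)" by (rule sum_abs)
      finally have "1 \<le> (\<Sum>i<d. \<bar>\<phi> (x i)\<bar>) / e" using e by simp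
      then have "fd f d x powr b / Zd * 1 \<le> fd f d x powr b / Zd * ((\<Sum>i<d. \<bar>\<phi> (x i)\<bar>) / e)"
        using Zdp by (intro mult_left_mono) auto
      then show ?thesis using True by (simp add: u_eq ennreal_leI)
    next
      case False
      then show ?thesis by simp
    qed
  qed
  also have "\<dots> = ennreal (\<integral>x. u x \<partial>leb d)"
    by (rule nn_integral_eq_integral[OF uint]) (simp add: u0)
  finally have em: "emeasure (tempered f d b) A \<le> ennreal (d * P / (Z1 * e))" unfolding uval .
  have nn: "0 \<le> d * P / (Z1 * e)"
  proof -
    have "0 \<le> P" unfolding P_def by (intro integral_nonneg_AE) auto
    then show ?thesis using Z1p e by simp
  qed
  have "measure (tempered f d b) A \<le> d * P / (Z1 * e)"
    using em nn by (simp add: measure_def enn2real_leI)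
  also have "\<dots> \<le> d * (c * W) / (Z1 * e)"
    using PW Z1p e by (intro divide_right_mono mult_left_mono) auto
  finally show ?thesis by (simp add: A_def W_def Z1_def mult.assoc)
qed

lemma coef_lim:
  fixes P T :: "real \<Rightarrow> real" and \<beta> ll :: real
  assumes \<beta>: "\<beta> > 0" and ll: "ll > 0"
    and P: "((\<lambda>u. P u / u^2) \<longlongrightarrow> 0) (at_right 0)"
    and T: "\<forall>\<epsilon>>0. T \<epsilon> = \<beta> * P (\<epsilon> / \<beta>)"
  shows "((\<lambda>d. real d * \<bar>T (ll / sqrt (real d))\<bar>) \<longlongrightarrow> 0) sequentially"
proof -
  define u where "u d = ll / sqrt (real d) / \<beta>" for d :: nat
  have v0: "((\<lambda>d::nat. 1 / sqrt (real d)) \<longlongrightarrow> 0) sequentially" by real_asymp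
  have u: "filterlim u (at_right 0) sequentially"
  proof (rule tendsto_imp_filterlim_at_right)
    have "((\<lambda>d::nat. (ll/\<beta>) * (1 / sqrt (real d))) \<longlongrightarrow> (ll/\<beta>) * 0) sequentially"
      by (rule tendsto_mult[OF tendsto_const v0])
    moreover have "u = (\<lambda>d::nat. (ll/\<beta>) * (1 / sqrt (real d)))" by (auto simp: u_def)
    ultimately show "(u \<longlongrightarrow> 0) sequentially" by simp
    show "\<forall>\<^sub>F d in sequentially. u d > 0"
      using \<beta> ll by (auto simp: u_def eventually_sequentially intro!: exI[of _ 1])
  qed
  have "((\<lambda>d. P (u d) / (u d)^2) \<longlongrightarrow> 0) sequentially"
    using filterlim_compose[OF P u] by (simp add: o_def)
  then have "((\<lambda>d. \<bar>P (u d) / (u d)^2\<bar>) \<longlongrightarrow> 0) sequentially" by (rule tendsto_rabs_zero)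
  then have "((\<lambda>d. ll^2 / \<beta> * \<bar>P (u d) / (u d)^2\<bar>) \<longlongrightarrow> ll^2 / \<beta> * 0) sequentially"
    by (rule tendsto_mult[OF tendsto_const])
  then have L: "((\<lambda>d. ll^2 / \<beta> * \<bar>P (u d) / (u d)^2\<bar>) \<longlongrightarrow> 0) sequentially" by simp
  show ?thesis
  proof (rule Lim_transform_eventually[OF L])
    show "\<forall>\<^sub>F d in sequentially. ll^2 / \<beta> * \<bar>P (u d) / (u d)^2\<bar> = real d * \<bar>T (ll / sqrt (real d))\<bar>"
    proof (rule eventually_sequentiallyI[of 1])
      fix d :: nat assume d: "d \<ge> 1"
      have sd: "sqrt (real d) > 0" using d by simp
      have ep: "ll / sqrt (real d) > 0" using sd ll by simp
      have Te: "T (ll / sqrt (real d)) = \<beta> * P (u d)" using T ep by (simp add: u_def)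
      have u2: "(u d)^2 = ll^2 / (real d * \<beta>^2)"
        using d by (simp add: u_def power_divide power_mult_distrib)
      show "ll^2 / \<beta> * \<bar>P (u d) / (u d)^2\<bar> = real d * \<bar>T (ll / sqrt (real d))\<bar>"
        unfolding Te u2 using \<beta> ll d by (simp add: abs_mult abs_divide field_simps power2_eq_square)
    qed
  qed
qed

lemma lim1: "((\<lambda>u::real. ((1+u)*(sqrt (1/(1+u)) - 1) + u/2 + u^2/8) / u^2) \<longlongrightarrow> 0) (at_right 0)"
  by real_asymp

lemma lim6': "((\<lambda>u::real. ((2+u-2 * sqrt (1+u))/2 - u^2/8) / u^2) \<longlongrightarrow> 0) (at_right 0)"
  by real_asymp

lemma lim2: "((\<lambda>u::real. ((1+u)*(sqrt (1/(1+u)) - 1)^2/2 - u^2/8) / u^2) \<longlongrightarrow> 0) (at_right 0)"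
proof (rule Lim_transform_eventually[OF lim6'])
  show "\<forall>\<^sub>F u in at_right 0. ((2+u-2 * sqrt (1+u))/2 - u^2/8) / u^2 = ((1+u)*(sqrt (1/(1+u)) - 1)^2/2 - u^2/8) / (u::real)^2"
  proof (rule eventually_at_rightI[of 0 1])
    fix u :: real assume u: "u \<in> {0<..<1}"
    have s: "sqrt (1/(1+u))^2 = 1/(1+u)" using u by simp
    have s2: "(1+u) * sqrt (1/(1+u)) = sqrt (1+u)"
      using u by (simp add: real_sqrt_divide field_simps)
    have "(1+u)*(sqrt (1/(1+u)) - 1)^2 = (1+u) * sqrt (1/(1+u))^2 - 2 * ((1+u) * sqrt (1/(1+u))) + (1+u)"
      by (simp add: power2_diff algebra_simps)
    also have "\<dots> = 2 + u - 2 * sqrt (1+u)" unfolding s s2 using u by simp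
    finally show "((2+u-2 * sqrt (1+u))/2 - u^2/8) / u^2 = ((1+u)*(sqrt (1/(1+u)) - 1)^2/2 - u^2/8) / u^2"
      by simp
  qed simp
qed

lemma lim3: "((\<lambda>u::real. ((1+u)*(sqrt (1/(1+u)) - 1)^3/6) / u^2) \<longlongrightarrow> 0) (at_right 0)"
  by real_asymp

lemma lim4: "((\<lambda>u::real. ((1+u)*(sqrt (1/(1+u)) - 1)^4/24) / u^2) \<longlongrightarrow> 0) (at_right 0)"
  by real_asymp

lemma lim5: "((\<lambda>u::real. ((sqrt (1+u) - 1) - u/2 + u^2/8) / u^2) \<longlongrightarrow> 0) (at_right 0)"
  by real_asymp

lemma lim6: "((\<lambda>u::real. ((sqrt (1+u) - 1)^2/2 - u^2/8) / u^2) \<longlongrightarrow> 0) (at_right 0)"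
proof (rule Lim_transform_eventually[OF lim6'])
  show "\<forall>\<^sub>F u in at_right 0. ((2+u-2 * sqrt (1+u))/2 - u^2/8) / u^2 = ((sqrt (1+u) - 1)^2/2 - u^2/8) / (u::real)^2"
  proof (rule eventually_at_rightI[of 0 1])
    fix u :: real assume u: "u \<in> {0<..<1}"
    have "(sqrt (1+u) - 1)^2 = 2 + u - 2 * sqrt (1+u)" using u by (simp add: power2_diff)
    then show "((2+u-2 * sqrt (1+u))/2 - u^2/8) / u^2 = ((sqrt (1+u) - 1)^2/2 - u^2/8) / u^2" by simp
  qed simp
qed

lemma lim7: "((\<lambda>u::real. ((sqrt (1+u) - 1)^3/6) / u^2) \<longlongrightarrow> 0) (at_right 0)"
  by real_asymp

lemma lim8: "((\<lambda>u::real. ((sqrt (1+u) - 1)^4/24) / u^2) \<longlongrightarrow> 0) (at_right 0)"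
  by real_asymp

lemma fmax_uni: "unimodal_at f mu \<Longrightarrow> f t \<le> f mu"
  unfolding unimodal_at_def by (cases "t \<le> mu") auto

lemma Zlow:
  fixes f :: "real \<Rightarrow> real"
  assumes pos: "\<forall>x. f x > 0" and uni: "unimodal_at f mu"
    and intf: "integrable lborel (\<lambda>t. f t powr b)" and b: "0 < b" "b \<le> B"
  shows "(\<integral>t. f t powr b \<partial>lborel) \<ge> 2 * (min 1 (min (f (mu-1)) (f (mu+1)))) powr B"
proof -
  define m1 where "m1 = min 1 (min (f (mu-1)) (f (mu+1)))"
  have m1p: "m1 > 0" "m1 \<le> 1" using pos by (auto simp: m1_def)
  have low: "f t \<ge> m1" if "t \<in> {mu-1..mu+1}" for t
  proof (cases "t \<le> mu")
    case True
    then have "f (mu-1) \<le> f t" using uni that unfolding unimodal_at_def by auto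
    then show ?thesis by (simp add: m1_def)
  next
    case False
    then have "f (mu+1) \<le> f t" using uni that unfolding unimodal_at_def by auto
    then show ?thesis by (simp add: m1_def)
  qed
  have ind: "integrable lborel (\<lambda>t. indicator {mu-1..mu+1} t * m1 powr B :: real)"
    by (intro integrable_mult_left integrable_real_indicator) auto
  have "(\<integral>t. indicator {mu-1..mu+1} t * m1 powr B \<partial>lborel) \<le> (\<integral>t. f t powr b \<partial>lborel)"
  proof (rule integral_mono[OF ind intf])
    fix t
    show "indicator {mu-1..mu+1} t * m1 powr B \<le> f t powr b"
    proof (cases "t \<in> {mu-1..mu+1}")
      case True
      have "m1 powr B \<le> m1 powr b" using m1p b by (intro powr_mono') auto
      also have "\<dots> \<le> f t powr b" using low[OF True] m1p b by (intro powr_mono2) auto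
      finally show ?thesis using True by simp
    next
      case False then show ?thesis by simp
    qed
  qed
  moreover have "(\<integral>t. indicator {mu-1..mu+1} t * m1 powr B \<partial>lborel) = 2 * m1 powr B"
    by simp
  ultimately show ?thesis by (simp add: m1_def)
qed

lemma Wup:
  fixes f w :: "real \<Rightarrow> real"
  assumes pos: "\<forall>x. f x > 0" and uni: "unimodal_at f mu" and w0: "\<forall>t. w t \<ge> 0"
    and int1: "integrable lborel (\<lambda>t. w t * f t powr b)"
    and int2: "integrable lborel (\<lambda>t. w t * f t powr \<beta>)"
    and b: "\<beta> \<le> b" "b - \<beta> \<le> L"
  shows "(\<integral>t. w t * f t powr b \<partial>lborel) \<le> max 1 (f mu) powr L * (\<integral>t. w t * f t powr \<beta> \<partial>lborel)"
proof -
  have "(\<integral>t. w t * f t powr b \<partial>lborel) \<le> (\<integral>t. max 1 (f mu) powr L * (w t * f t powr \<beta>) \<partial>lborel)"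
  proof (rule integral_mono[OF int1])
    show "integrable lborel (\<lambda>t. max 1 (f mu) powr L * (w t * f t powr \<beta>))" using int2 by simp
    fix t
    have ft: "0 < f t" using pos by simp
    have "f t powr b = f t powr \<beta> * f t powr (b - \<beta>)" by (simp add: powr_add[symmetric])
    also have "f t powr (b - \<beta>) \<le> max 1 (f mu) powr (b - \<beta>)"
      using ft fmax_uni[OF uni, of t] b by (intro powr_mono2) auto
    also have "\<dots> \<le> max 1 (f mu) powr L" using b by (intro powr_mono) auto
    finally have "f t powr b \<le> f t powr \<beta> * max 1 (f mu) powr L"
      by (simp add: mult_left_mono)
    then have "w t * f t powr b \<le> w t * (f t powr \<beta> * max 1 (f mu) powr L)"
      using w0 by (intro mult_left_mono) auto
    then show "w t * f t powr b \<le> max 1 (f mu) powr L * (w t * f t powr \<beta>)" by (simp add: algebra_simps)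
  qed
  then show ?thesis by simp
qed

definition Exf :: "real \<Rightarrow> real \<Rightarrow> real" where
  "Exf \<beta> \<epsilon> = \<bar>(\<beta>+\<epsilon>)*(sqrt(\<beta>/(\<beta>+\<epsilon>)) - 1) - (-\<epsilon>/2 - \<epsilon>^2/(8*\<beta>))\<bar>
     + \<bar>(\<beta>+\<epsilon>)*(sqrt(\<beta>/(\<beta>+\<epsilon>)) - 1)^2/2 - \<epsilon>^2/(8*\<beta>)\<bar>
     + \<bar>(\<beta>+\<epsilon>)*(sqrt(\<beta>/(\<beta>+\<epsilon>)) - 1)^3/6\<bar> + \<bar>(\<beta>+\<epsilon>)*(sqrt(\<beta>/(\<beta>+\<epsilon>)) - 1)^4/24\<bar>"

definition Eyf :: "real \<Rightarrow> real \<Rightarrow> real" where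
  "Eyf \<beta> \<epsilon> = \<bar>\<beta>*(sqrt((\<beta>+\<epsilon>)/\<beta>) - 1) - (\<epsilon>/2 - \<epsilon>^2/(8*\<beta>))\<bar>
     + \<bar>\<beta>*(sqrt((\<beta>+\<epsilon>)/\<beta>) - 1)^2/2 - \<epsilon>^2/(8*\<beta>)\<bar>
     + \<bar>\<beta>*(sqrt((\<beta>+\<epsilon>)/\<beta>) - 1)^3/6\<bar> + \<bar>\<beta>*(sqrt((\<beta>+\<epsilon>)/\<beta>) - 1)^4/24\<bar>"

lemma Exf_lim:
  assumes b: "\<beta> > 0" and l: "ll > 0"
  shows "((\<lambda>d. real d * Exf \<beta> (ll / sqrt (real d))) \<longlongrightarrow> 0) sequentially"
proof -
  have r: "sqrt (1/(1+\<epsilon>/\<beta>)) = sqrt (\<beta>/(\<beta>+\<epsilon>))" if "\<epsilon> > 0" for \<epsilon>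
    using b that by (simp add: field_simps)
  have e1: "((\<lambda>d. real d * \<bar>(\<lambda>\<epsilon>. (\<beta>+\<epsilon>)*(sqrt(\<beta>/(\<beta>+\<epsilon>)) - 1) - (-\<epsilon>/2 - \<epsilon>^2/(8*\<beta>))) (ll / sqrt (real d))\<bar>) \<longlongrightarrow> 0) sequentially"
    by (rule coef_lim[OF b l lim1]) (use b r in \<open>auto simp: field_simps power2_eq_square\<close>)
  have e2: "((\<lambda>d. real d * \<bar>(\<lambda>\<epsilon>. (\<beta>+\<epsilon>)*(sqrt(\<beta>/(\<beta>+\<epsilon>)) - 1)^2/2 - \<epsilon>^2/(8*\<beta>)) (ll / sqrt (real d))\<bar>) \<longlongrightarrow> 0) sequentially"
  proof (rule coef_lim[OF b l lim2], intro allI impI)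
    fix \<epsilon> :: real assume e: "\<epsilon> > 0"
    have g: "\<beta>*((1+\<epsilon>/\<beta>)*X/2 - (\<epsilon>/\<beta>)^2/8) = (\<beta>+\<epsilon>)*X/2 - \<epsilon>^2/(8*\<beta>)" for X
      using b by (simp add: field_simps power2_eq_square)
    show "(\<beta>+\<epsilon>)*(sqrt(\<beta>/(\<beta>+\<epsilon>)) - 1)^2/2 - \<epsilon>^2/(8*\<beta>) = \<beta> * ((1+\<epsilon>/\<beta>)*(sqrt (1/(1+\<epsilon>/\<beta>)) - 1)^2/2 - (\<epsilon>/\<beta>)^2/8)"
      unfolding r[OF e] g ..
  qed
  have e3: "((\<lambda>d. real d * \<bar>(\<lambda>\<epsilon>. (\<beta>+\<epsilon>)*(sqrt(\<beta>/(\<beta>+\<epsilon>)) - 1)^3/6) (ll / sqrt (real d))\<bar>) \<longlongrightarrow> 0) sequentially"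
    by (rule coef_lim[OF b l lim3]) (use b r in \<open>auto simp: field_simps\<close>)
  have e4: "((\<lambda>d. real d * \<bar>(\<lambda>\<epsilon>. (\<beta>+\<epsilon>)*(sqrt(\<beta>/(\<beta>+\<epsilon>)) - 1)^4/24) (ll / sqrt (real d))\<bar>) \<longlongrightarrow> 0) sequentially"
    by (rule coef_lim[OF b l lim4]) (use b r in \<open>auto simp: field_simps\<close>)
  have "((\<lambda>d. real d * \<bar>(\<lambda>\<epsilon>. (\<beta>+\<epsilon>)*(sqrt(\<beta>/(\<beta>+\<epsilon>)) - 1) - (-\<epsilon>/2 - \<epsilon>^2/(8*\<beta>))) (ll / sqrt (real d))\<bar>
      + real d * \<bar>(\<lambda>\<epsilon>. (\<beta>+\<epsilon>)*(sqrt(\<beta>/(\<beta>+\<epsilon>)) - 1)^2/2 - \<epsilon>^2/(8*\<beta>)) (ll / sqrt (real d))\<bar>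
      + real d * \<bar>(\<lambda>\<epsilon>. (\<beta>+\<epsilon>)*(sqrt(\<beta>/(\<beta>+\<epsilon>)) - 1)^3/6) (ll / sqrt (real d))\<bar>
      + real d * \<bar>(\<lambda>\<epsilon>. (\<beta>+\<epsilon>)*(sqrt(\<beta>/(\<beta>+\<epsilon>)) - 1)^4/24) (ll / sqrt (real d))\<bar>) \<longlongrightarrow> 0 + 0 + 0 + 0) sequentially"
    by (intro tendsto_add e1 e2 e3 e4)
  then show ?thesis by (simp add: Exf_def distrib_left)
qed

lemma Eyf_lim:
  assumes b: "\<beta> > 0" and l: "ll > 0"
  shows "((\<lambda>d. real d * Eyf \<beta> (ll / sqrt (real d))) \<longlongrightarrow> 0) sequentially"
proof -
  have r: "sqrt (1+\<epsilon>/\<beta>) = sqrt ((\<beta>+\<epsilon>)/\<beta>)" if "\<epsilon> > 0" for \<epsilon>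
    using b that by (simp add: field_simps)
  have e1: "((\<lambda>d. real d * \<bar>(\<lambda>\<epsilon>. \<beta>*(sqrt((\<beta>+\<epsilon>)/\<beta>) - 1) - (\<epsilon>/2 - \<epsilon>^2/(8*\<beta>))) (ll / sqrt (real d))\<bar>) \<longlongrightarrow> 0) sequentially"
    by (rule coef_lim[OF b l lim5]) (use b r in \<open>auto simp: field_simps power2_eq_square\<close>)
  have e2: "((\<lambda>d. real d * \<bar>(\<lambda>\<epsilon>. \<beta>*(sqrt((\<beta>+\<epsilon>)/\<beta>) - 1)^2/2 - \<epsilon>^2/(8*\<beta>)) (ll / sqrt (real d))\<bar>) \<longlongrightarrow> 0) sequentially"
  proof (rule coef_lim[OF b l lim6], intro allI impI)
    fix \<epsilon> :: real assume e: "\<epsilon> > 0"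
    have g: "\<beta>*(X/2 - (\<epsilon>/\<beta>)^2/8) = \<beta>*X/2 - \<epsilon>^2/(8*\<beta>)" for X
      using b by (simp add: field_simps power2_eq_square)
    show "\<beta>*(sqrt((\<beta>+\<epsilon>)/\<beta>) - 1)^2/2 - \<epsilon>^2/(8*\<beta>) = \<beta> * ((sqrt (1+\<epsilon>/\<beta>) - 1)^2/2 - (\<epsilon>/\<beta>)^2/8)"
      unfolding r[OF e] g by simp
  qed
  have e3: "((\<lambda>d. real d * \<bar>(\<lambda>\<epsilon>. \<beta>*(sqrt((\<beta>+\<epsilon>)/\<beta>) - 1)^3/6) (ll / sqrt (real d))\<bar>) \<longlongrightarrow> 0) sequentially"
    by (rule coef_lim[OF b l lim7]) (use b r in \<open>auto simp: field_simps\<close>)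
  have e4: "((\<lambda>d. real d * \<bar>(\<lambda>\<epsilon>. \<beta>*(sqrt((\<beta>+\<epsilon>)/\<beta>) - 1)^4/24) (ll / sqrt (real d))\<bar>) \<longlongrightarrow> 0) sequentially"
    by (rule coef_lim[OF b l lim8]) (use b r in \<open>auto simp: field_simps\<close>)
  have "((\<lambda>d. real d * \<bar>(\<lambda>\<epsilon>. \<beta>*(sqrt((\<beta>+\<epsilon>)/\<beta>) - 1) - (\<epsilon>/2 - \<epsilon>^2/(8*\<beta>))) (ll / sqrt (real d))\<bar>
      + real d * \<bar>(\<lambda>\<epsilon>. \<beta>*(sqrt((\<beta>+\<epsilon>)/\<beta>) - 1)^2/2 - \<epsilon>^2/(8*\<beta>)) (ll / sqrt (real d))\<bar>
      + real d * \<bar>(\<lambda>\<epsilon>. \<beta>*(sqrt((\<beta>+\<epsilon>)/\<beta>) - 1)^3/6) (ll / sqrt (real d))\<bar>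
      + real d * \<bar>(\<lambda>\<epsilon>. \<beta>*(sqrt((\<beta>+\<epsilon>)/\<beta>) - 1)^4/24) (ll / sqrt (real d))\<bar>) \<longlongrightarrow> 0 + 0 + 0 + 0) sequentially"
    by (intro tendsto_add e1 e2 e3 e4)
  then show ?thesis by (simp add: Eyf_def distrib_left)
qed

lemma fd_exp: "(\<forall>x. f x > 0) \<Longrightarrow> fd f d z powr b = exp (b * (\<Sum>i<d. hfun f (z i)))"
proof -
  assume pos: "\<forall>x. f x > 0"
  have p: "fd f d z > 0" unfolding fd_def using pos by (intro prod_pos) auto
  have "ln (fd f d z) = (\<Sum>i<d. hfun f (z i))"
    unfolding fd_def hfun_def using pos by (subst ln_prod) (auto simp: less_imp_neq[symmetric])
  then show ?thesis using p by (simp add: powr_def)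
qed

lemma ln4: "ln (exp a * exp b / (exp c * exp d)) = a + b - c - (d::real)"
proof -
  have "exp a * exp b / (exp c * exp d) = exp (a + b - c - d)"
    by (simp add: exp_add exp_diff)
  then show ?thesis by simp
qed

theorem lemma1:
  fixes f :: "real \<Rightarrow> real" and mu \<beta> ell M :: real
  assumes pos: "\<forall>x. f x > 0"
    and C4: "C4 f"
    and unimodal: "unimodal_at f mu"
    and regvar: "regularly_varying (\<lambda>t. - ln (f t))"
    and M: "M > 0" "\<forall>x. \<bar>(deriv ^^ 4) (hfun f) x\<bar> < M"
    and beta: "\<beta> > 0" and ellpos: "ell > 0"
  shows "\<exists>Tx Ty :: nat \<Rightarrow> (nat \<Rightarrow> real) \<Rightarrow> real.
     (\<forall>d\<ge>1. \<forall>x y. let \<epsilon> = ell / sqrt (real d) in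
        Bratio f mu d \<beta> (\<beta> + \<epsilon>) x y =
          \<epsilon> * (\<Sum>i<d. hfun f (x i) - hfun f (y i) + (kfun f mu (y i) - kfun f mu (x i)) / 2)
          + \<epsilon>^2 / (8 * \<beta>) * (\<Sum>i<d. rfun f mu (x i) - kfun f mu (x i) + rfun f mu (y i) - kfun f mu (y i))
          + (Tx d x + Ty d y))
   \<and> (\<forall>d. Tx d \<in> borel_measurable (leb d) \<and> Ty d \<in> borel_measurable (leb d))
   \<and> (\<forall>e>0. ((\<lambda>d. measure (tempered f d \<beta>)
                 {x \<in> space (tempered f d \<beta>). \<bar>Tx d x\<bar> > e}) \<longlongrightarrow> 0) sequentially)
   \<and> (\<forall>e>0. ((\<lambda>d. measure (tempered f d (\<beta> + ell / sqrt (real d)))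
                 {y \<in> space (tempered f d (\<beta> + ell / sqrt (real d))). \<bar>Ty d y\<bar> > e}) \<longlongrightarrow> 0) sequentially)"
proof -
  define h where "h = hfun f"
  define D where "D m = (deriv ^^ m) h" for m
  have der: "\<forall>m<4. \<forall>t. (D m has_real_derivative D (Suc m) t) (at t)"
    using hfun_derivs[OF pos C4] by (simp add: D_def h_def)
  have Mb: "\<forall>t. \<bar>D 4 t\<bar> \<le> M" using M(2) by (simp add: D_def h_def less_imp_le)
  define A where "A = \<bar>D 1 mu\<bar> + \<bar>D 2 mu\<bar> + \<bar>D 3 mu\<bar> + M"
  define w where "w t = (1 + \<bar>t - mu\<bar>)^4" for t
  have pb1: "\<bar>(t-mu) * D 1 t\<bar> \<le> A * w t" for t using poly_bounds(1)[OF der Mb, where mu=mu and t=t] by (simp add: A_def w_def)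
  have pb2: "\<bar>(t-mu)^2 * D 2 t\<bar> \<le> A * w t" for t using poly_bounds(2)[OF der Mb, where mu=mu and t=t] by (simp add: A_def w_def)
  have pb3: "\<bar>(t-mu)^3 * D 3 t\<bar> \<le> A * w t" for t using poly_bounds(3)[OF der Mb, where mu=mu and t=t] by (simp add: A_def w_def)
  have pb4: "M * (t-mu)^4 \<le> A * w t" for t using poly_bounds(4)[OF der Mb, where mu=mu and t=t] by (simp add: A_def w_def)
  have A0: "A \<ge> 0" using M by (simp add: A_def)
  have w1: "w t \<ge> 1" for t by (simp add: w_def)
  have D0: "D 0 = h" by (simp add: D_def)
  have D1: "D 1 = deriv h" by (simp add: D_def)
  have D2: "D 2 = deriv (deriv h)" by (simp add: D_def numeral_2_eq_2)
  have kf: "kfun f mu t = (t-mu) * D 1 t" for t by (simp add: kfun_def D_def h_def)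
  have rf: "rfun f mu t = (t-mu)^2 * D 2 t" for t by (simp add: rfun_def D_def h_def numeral_2_eq_2)
  have contD: "continuous_on UNIV (D m)" if "m < 4" for m
    using der that by (intro continuous_at_imp_continuous_on ballI DERIV_isCont) auto
  have hm[measurable]: "h \<in> borel_measurable borel" using contD[of 0] D0 by (intro borel_measurable_continuous_onI) auto
  have h1m[measurable]: "deriv h \<in> borel_measurable borel" using contD[of 1] D1 by (intro borel_measurable_continuous_onI) auto
  have h2m[measurable]: "deriv (deriv h) \<in> borel_measurable borel" using contD[of 2] D2 by (intro borel_measurable_continuous_onI) auto
  have contf: "continuous_on UNIV f"
  proof -
    have "\<forall>x. (f has_real_derivative (deriv ^^ 1) f x) (at x)"
    proof
      fix x
      have c: "\<forall>n<4. \<forall>x. ((deriv ^^ n) f has_real_derivative (deriv ^^ Suc n) f x) (at x)"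
        using C4 unfolding C4_def by blast
      have "((deriv ^^ 0) f has_real_derivative (deriv ^^ Suc 0) f x) (at x)"
        using c[rule_format, of 0 x] by simp
      then show "(f has_real_derivative (deriv ^^ 1) f x) (at x)" by simp
    qed
    then show ?thesis by (intro continuous_at_imp_continuous_on ballI) (auto intro: DERIV_isCont)
  qed
  have fm[measurable]: "f \<in> borel_measurable borel" by (rule borel_measurable_continuous_onI[OF contf])
  have wm[measurable]: "w \<in> borel_measurable borel" unfolding w_def by measurable
  define eps where "eps d = ell / sqrt (real d)" for d :: nat
  have eps0: "eps d \<ge> 0" for d using ellpos by (simp add: eps_def)
  have epsl: "eps d \<le> ell" for d
  proof (cases "d = 0")
    case True then show ?thesis using ellpos by (simp add: eps_def)
  next
    case False
    then have "sqrt (real d) \<ge> 1" by simp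
    then show ?thesis using ellpos by (simp add: eps_def divide_le_eq_1 divide_le_eq)
  qed
  define phx where "phx d t = (\<beta> + eps d) * h (sqrt (\<beta> / (\<beta> + eps d)) * (t - mu) + mu) - \<beta> * h t
      - eps d * (h t - kfun f mu t / 2) - (eps d)^2 / (8*\<beta>) * (rfun f mu t - kfun f mu t)" for d t
  define phy where "phy d t = \<beta> * h (sqrt ((\<beta> + eps d) / \<beta>) * (t - mu) + mu) - (\<beta> + eps d) * h t
      + eps d * (h t - kfun f mu t / 2) - (eps d)^2 / (8*\<beta>) * (rfun f mu t - kfun f mu t)" for d t
  have phxm[measurable]: "phx d \<in> borel_measurable borel" for d
    unfolding phx_def kfun_def rfun_def h_def[symmetric] by measurable
  have phym[measurable]: "phy d \<in> borel_measurable borel" for d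
    unfolding phy_def kfun_def rfun_def h_def[symmetric] by measurable
  have bx: "\<bar>phx d t\<bar> \<le> (Exf \<beta> (eps d) * A) * w t" for d t
  proof -
    have "phx d t = (\<beta> + eps d) * D 0 (sqrt (\<beta> / (\<beta> + eps d))*(t-mu)+mu) - \<beta> * D 0 t
        - ((\<beta> + eps d) - \<beta>) * D 0 t - (-eps d/2 - (eps d)^2/(8*\<beta>)) * ((t-mu) * D 1 t)
        - (eps d)^2/(8*\<beta>) * ((t-mu)^2 * D 2 t)"
      unfolding phx_def kf rf D0 using beta by (simp add: field_simps)
    also have "\<bar>\<dots>\<bar> \<le> Exf \<beta> (eps d) * (A * w t)"
      unfolding Exf_def by (rule expand_bound[OF der Mb pb1 pb2 pb3 pb4])
    finally show ?thesis by (simp add: mult.assoc)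
  qed
  have by': "\<bar>phy d t\<bar> \<le> (Eyf \<beta> (eps d) * A) * w t" for d t
  proof -
    have "phy d t = \<beta> * D 0 (sqrt ((\<beta> + eps d) / \<beta>)*(t-mu)+mu) - (\<beta> + eps d) * D 0 t
        - (\<beta> - (\<beta> + eps d)) * D 0 t - (eps d/2 - (eps d)^2/(8*\<beta>)) * ((t-mu) * D 1 t)
        - (eps d)^2/(8*\<beta>) * ((t-mu)^2 * D 2 t)"
      unfolding phy_def kf rf D0 using beta by (simp add: field_simps)
    also have "\<bar>\<dots>\<bar> \<le> Eyf \<beta> (eps d) * (A * w t)"
      unfolding Eyf_def by (rule expand_bound[OF der Mb pb1 pb2 pb3 pb4])
    finally show ?thesis by (simp add: mult.assoc)
  qed
  have sandwich0: "(a \<longlongrightarrow> 0) sequentially"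
    if "\<And>d. 0 \<le> a d" "\<And>d. a d \<le> b d * K" "(b \<longlongrightarrow> 0) sequentially" for a b :: "nat \<Rightarrow> real" and K :: real
  proof (rule tendsto_sandwich[of "\<lambda>_. 0" a sequentially "\<lambda>d. b d * K"])
    show "\<forall>\<^sub>F n in sequentially. 0 \<le> a n" using that(1) by simp
    show "\<forall>\<^sub>F n in sequentially. a n \<le> b n * K" using that(2) by simp
    show "((\<lambda>_. 0) \<longlongrightarrow> (0::real)) sequentially" by simp
    have "((\<lambda>d. b d * K) \<longlongrightarrow> 0 * K) sequentially" by (intro tendsto_mult that(3) tendsto_const)
    then show "((\<lambda>d. b d * K) \<longlongrightarrow> 0) sequentially" by simp
  qed
  have intw: "integrable lborel (\<lambda>t. w t * f t powr b)" if "b > 0" for b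
    using weighted_integrable[OF pos contf unimodal regvar that] by (simp add: w_def)
  have intf: "integrable lborel (\<lambda>t. f t powr b)" if "b > 0" for b
  proof (rule Bochner_Integration.integrable_bound[OF intw[OF that]])
    show "(\<lambda>t. f t powr b) \<in> borel_measurable lborel" by measurable
    show "AE x in lborel. norm (f x powr b) \<le> norm (w x * f x powr b)"
    proof (intro AE_I2)
      fix x
      have "f x powr b * 1 \<le> f x powr b * w x" using w1[of x] by (intro mult_left_mono) auto
      then show "norm (f x powr b) \<le> norm (w x * f x powr b)" using w1[of x] by (simp add: mult.commute)
    qed
  qed
  define m1 where "m1 = min 1 (min (f (mu-1)) (f (mu+1)))"
  have m1p: "m1 > 0" using pos by (simp add: m1_def)
  have Zlo: "(\<integral>t. f t powr b \<partial>lborel) \<ge> 2 * m1 powr B" if "0 < b" "b \<le> B" for b B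
    using Zlow[OF pos unimodal intf[OF that(1)] that] by (simp add: m1_def)
  have Wnn: "(\<integral>t. w t * f t powr b \<partial>lborel) \<ge> 0" for b
    by (intro integral_nonneg_AE AE_I2) (simp add: w_def)
  have ident: "\<forall>d\<ge>1. \<forall>x y. let \<epsilon> = ell / sqrt (real d) in
        Bratio f mu d \<beta> (\<beta> + \<epsilon>) x y =
          \<epsilon> * (\<Sum>i<d. hfun f (x i) - hfun f (y i) + (kfun f mu (y i) - kfun f mu (x i)) / 2)
          + \<epsilon>^2 / (8 * \<beta>) * (\<Sum>i<d. rfun f mu (x i) - kfun f mu (x i) + rfun f mu (y i) - kfun f mu (y i))
          + ((\<Sum>i<d. phx d (x i)) + (\<Sum>i<d. phy d (y i)))"
  proof (intro allI impI)
    fix d :: nat and x y :: "nat \<Rightarrow> real" assume "d \<ge> 1"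
    have L: "Bratio f mu d \<beta> (\<beta> + eps d) x y = (\<Sum>i<d. (\<beta> + eps d) * h (sqrt (\<beta> / (\<beta> + eps d)) * (x i - mu) + mu)
        + \<beta> * h (sqrt ((\<beta> + eps d) / \<beta>) * (y i - mu) + mu) - (\<beta> + eps d) * h (y i) - \<beta> * h (x i))"
      unfolding Bratio_def fd_exp[OF pos] ln4 gmap_def h_def
      by (simp add: sum_distrib_left sum.distrib sum_subtractf)
    have R: "eps d * (\<Sum>i<d. h (x i) - h (y i) + (kfun f mu (y i) - kfun f mu (x i)) / 2)
          + (eps d)^2 / (8 * \<beta>) * (\<Sum>i<d. rfun f mu (x i) - kfun f mu (x i) + rfun f mu (y i) - kfun f mu (y i))
          + ((\<Sum>i<d. phx d (x i)) + (\<Sum>i<d. phy d (y i)))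
        = (\<Sum>i<d. eps d * (h (x i) - h (y i) + (kfun f mu (y i) - kfun f mu (x i)) / 2)
          + (eps d)^2 / (8 * \<beta>) * (rfun f mu (x i) - kfun f mu (x i) + rfun f mu (y i) - kfun f mu (y i))
          + phx d (x i) + phy d (y i))"
      unfolding sum_distrib_left by (simp add: sum.distrib)
    also have "\<dots> = (\<Sum>i<d. (\<beta> + eps d) * h (sqrt (\<beta> / (\<beta> + eps d)) * (x i - mu) + mu)
        + \<beta> * h (sqrt ((\<beta> + eps d) / \<beta>) * (y i - mu) + mu) - (\<beta> + eps d) * h (y i) - \<beta> * h (x i))"
      by (rule sum.cong) (use beta in \<open>simp_all add: phx_def phy_def field_simps\<close>)
    finally show "let \<epsilon> = ell / sqrt (real d) in
        Bratio f mu d \<beta> (\<beta> + \<epsilon>) x y =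
          \<epsilon> * (\<Sum>i<d. hfun f (x i) - hfun f (y i) + (kfun f mu (y i) - kfun f mu (x i)) / 2)
          + \<epsilon>^2 / (8 * \<beta>) * (\<Sum>i<d. rfun f mu (x i) - kfun f mu (x i) + rfun f mu (y i) - kfun f mu (y i))
          + ((\<Sum>i<d. phx d (x i)) + (\<Sum>i<d. phy d (y i)))"
      using L unfolding Let_def eps_def[symmetric] h_def[symmetric] by simp
  qed
  have meas: "\<forall>d. (\<lambda>x. \<Sum>i<d. phx d (x i)) \<in> borel_measurable (leb d) \<and> (\<lambda>y. \<Sum>i<d. phy d (y i)) \<in> borel_measurable (leb d)"
    unfolding leb_def by measurable
  have limx: "\<forall>e>0. ((\<lambda>d. measure (tempered f d \<beta>)
                 {x \<in> space (tempered f d \<beta>). \<bar>\<Sum>i<d. phx d (x i)\<bar> > e}) \<longlongrightarrow> 0) sequentially"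
  proof (intro allI impI)
    fix e :: real assume e: "e > 0"
    define Z where "Z = (\<integral>t. f t powr \<beta> \<partial>lborel)"
    define W where "W = (\<integral>t. w t * f t powr \<beta> \<partial>lborel)"
    have Zp: "Z > 0" using Zlo[of \<beta> \<beta>] beta m1p unfolding Z_def
      by (smt (verit) powr_gt_zero)
    show "((\<lambda>d. measure (tempered f d \<beta>)
                 {x \<in> space (tempered f d \<beta>). \<bar>\<Sum>i<d. phx d (x i)\<bar> > e}) \<longlongrightarrow> 0) sequentially"
    proof (rule sandwich0)
      show "0 \<le> measure (tempered f d \<beta>) {x \<in> space (tempered f d \<beta>). \<bar>\<Sum>i<d. phx d (x i)\<bar> > e}" for d
        by simp
      show "measure (tempered f d \<beta>) {x \<in> space (tempered f d \<beta>). \<bar>\<Sum>i<d. phx d (x i)\<bar> > e}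
          \<le> (real d * Exf \<beta> (ell / sqrt (real d))) * (A * W / (Z * e))" for d
      proof -
        have "measure (tempered f d \<beta>) {x \<in> space (tempered f d \<beta>). e < \<bar>\<Sum>i<d. phx d (x i)\<bar>}
            \<le> d * (Exf \<beta> (eps d) * A) * W / (Z * e)"
          unfolding W_def Z_def
          by (rule prob_bound[OF pos fm phxm wm intf[OF beta] intw[OF beta] _ e])
             (use bx Zp Z_def in auto)
        then show ?thesis by (simp add: eps_def)
      qed
      show "((\<lambda>d. real d * Exf \<beta> (ell / sqrt (real d))) \<longlongrightarrow> 0) sequentially"
        by (rule Exf_lim[OF beta ellpos])
    qed
  qed
  have limy: "\<forall>e>0. ((\<lambda>d. measure (tempered f d (\<beta> + ell / sqrt (real d)))
                 {y \<in> space (tempered f d (\<beta> + ell / sqrt (real d))). \<bar>\<Sum>i<d. phy d (y i)\<bar> > e}) \<longlongrightarrow> 0) sequentially"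
  proof (intro allI impI)
    fix e :: real assume e: "e > 0"
    define W where "W = (\<integral>t. w t * f t powr \<beta> \<partial>lborel)"
    define Fm where "Fm = max 1 (f mu) powr ell"
    define zl where "zl = 2 * m1 powr (\<beta> + ell)"
    have zlp: "zl > 0" using m1p by (simp add: zl_def)
    show "((\<lambda>d. measure (tempered f d (\<beta> + ell / sqrt (real d)))
                 {y \<in> space (tempered f d (\<beta> + ell / sqrt (real d))). \<bar>\<Sum>i<d. phy d (y i)\<bar> > e}) \<longlongrightarrow> 0) sequentially"
    proof (rule sandwich0)
      show "0 \<le> measure (tempered f d (\<beta> + ell / sqrt (real d)))
                 {y \<in> space (tempered f d (\<beta> + ell / sqrt (real d))). \<bar>\<Sum>i<d. phy d (y i)\<bar> > e}" for d
        by simp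
      show "measure (tempered f d (\<beta> + ell / sqrt (real d)))
                 {y \<in> space (tempered f d (\<beta> + ell / sqrt (real d))). \<bar>\<Sum>i<d. phy d (y i)\<bar> > e}
          \<le> (real d * Eyf \<beta> (ell / sqrt (real d))) * (A * (Fm * W) / (zl * e))" for d
      proof -
        define b where "b = \<beta> + eps d"
        have bp: "b > 0" using beta eps0[of d] by (simp add: b_def)
        have bB: "b \<le> \<beta> + ell" using epsl[of d] by (simp add: b_def)
        define Zd where "Zd = (\<integral>t. f t powr b \<partial>lborel)"
        define Wd where "Wd = (\<integral>t. w t * f t powr b \<partial>lborel)"
        have Zdl: "Zd \<ge> zl" using Zlo[OF bp bB] by (simp add: Zd_def zl_def)
        have Wdu: "Wd \<le> Fm * W" unfolding Wd_def Fm_def W_def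
          by (rule Wup[OF pos unimodal _ intw[OF bp] intw[OF beta]]) (use w1 epsl[of d] eps0[of d] in \<open>auto intro: order_trans[OF zero_le_one] simp: b_def\<close>)
        have X0: "0 \<le> real d * (Eyf \<beta> (eps d) * A)" using A0 by (simp add: Eyf_def)
        have "measure (tempered f d b) {y \<in> space (tempered f d b). e < \<bar>\<Sum>i<d. phy d (y i)\<bar>}
            \<le> d * (Eyf \<beta> (eps d) * A) * Wd / (Zd * e)"
          unfolding Wd_def Zd_def
          by (rule prob_bound[OF pos fm phym wm intf[OF bp] intw[OF bp] _ e])
             (use by' Zdl zlp Zd_def in auto)
        also have "\<dots> \<le> d * (Eyf \<beta> (eps d) * A) * (Fm * W) / (zl * e)"
        proof (rule frac_le)
          show "0 \<le> real d * (Eyf \<beta> (eps d) * A) * (Fm * W)"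
            using X0 Wnn[of \<beta>] by (simp add: Fm_def W_def)
          show "real d * (Eyf \<beta> (eps d) * A) * Wd \<le> real d * (Eyf \<beta> (eps d) * A) * (Fm * W)"
            using X0 Wdu by (intro mult_left_mono) auto
          show "0 < zl * e" using zlp e by simp
          show "zl * e \<le> Zd * e" using Zdl e by simp
        qed
        finally show ?thesis by (simp add: b_def eps_def)
      qed
      show "((\<lambda>d. real d * Eyf \<beta> (ell / sqrt (real d))) \<longlongrightarrow> 0) sequentially"
        by (rule Eyf_lim[OF beta ellpos])
    qed
  qed
  show ?thesis
    apply (rule exI[of _ "\<lambda>d x. \<Sum>i<d. phx d (x i)"])
    apply (rule exI[of _ "\<lambda>d y. \<Sum>i<d. phy d (y i)"])
    using ident meas limx limy by simp
qed

end
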